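(* Let $G$ be an étale groupoid with base $T=G^{(0)}$, $T_0$ a totally disconnected $G$-space whose structure map $g\colon T_0\to T$ is proper with fibers of at most $N$ points, $T_n$ the $(n+1)$-fold fiber product of $T_0$ over $T$, and $g_n\colon T_n\to T$ the induced map. Let $F$ be a $G$-sheaf, $F^n=(g_n)_*(g_n^*F)$, and $F^{n,a}\subset F^n$ the alternating subsheaf. Then $F^{n,a}$ is c-soft.
   Context: All spaces are second countable locally compact Hausdorff. $T_n=\{(x_0,\dots,x_n)\in T_0^{n+1}:g(x_0)=\dots=g(x_n)\}$, $g_n(x_0,\dots,x_n)=g(x_0)$; $S_{n+1}$ acts on $T_n$ by permuting coordinates, hence on $F^n$ (using $\Gamma(U,F^n)=\Gamma(g_n^{-1}(U),g_n^*F)$). $T_n^f\subset T_n$ is the open set of points with pairwise distinct coordinates. For $U\subset T$ open, $\Gamma(U,F^{n,a})=\{x\in\Gamma(U,F^n): \operatorname{supp}x\subset T_n^f,\ s x=(-1)^{|s|}x\ \forall s\in S_{n+1}\}$. A sheaf is c-soft if every section over a compact subset extends to a global section. *)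

theory Defs
  imports "HOL-Analysis.Analysis" "HOL-Combinatorics.Permutations"
begin

definition sclch :: "'a topology \<Rightarrow> bool" where
  "sclch X \<longleftrightarrow> second_countable X \<and> locally_compact_space X \<and> Hausdorff_space X"

definition totally_disconnected_space :: "'a topology \<Rightarrow> bool" where
  "totally_disconnected_space X \<longleftrightarrow> (\<forall>C. connectedin X C \<longrightarrow> (\<exists>a. C \<subseteq> {a}))"

definition local_homeo :: "'a topology \<Rightarrow> 'b topology \<Rightarrow> ('a \<Rightarrow> 'b) \<Rightarrow> bool" where
  "local_homeo X Y f \<longleftrightarrow> continuous_map X Y f \<and>
     (\<forall>x\<in>topspace X. \<exists>W. openin X W \<and> x \<in> W \<and> openin Y (f ` W) \<and>
        homeomorphic_map (subtopology X W) (subtopology Y (f ` W)) f)"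

definition fibprod :: "'a topology \<Rightarrow> ('a \<Rightarrow> 'c) \<Rightarrow> 'b topology \<Rightarrow> ('b \<Rightarrow> 'c) \<Rightarrow> ('a \<times> 'b) topology" where
  "fibprod X f Y h = subtopology (prod_topology X Y)
      {(x, y). x \<in> topspace X \<and> y \<in> topspace Y \<and> f x = h y}"

definition groupoid ::
  "'g set \<Rightarrow> 't set \<Rightarrow> ('g \<Rightarrow> 't) \<Rightarrow> ('g \<Rightarrow> 't) \<Rightarrow> ('g \<Rightarrow> 'g \<Rightarrow> 'g) \<Rightarrow> ('g \<Rightarrow> 'g) \<Rightarrow> ('t \<Rightarrow> 'g) \<Rightarrow> bool" where
  "groupoid Gs Ts s r m i u \<longleftrightarrow>
     (\<forall>a\<in>Gs. s a \<in> Ts \<and> r a \<in> Ts \<and> i a \<in> Gs) \<and>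
     (\<forall>x\<in>Ts. u x \<in> Gs \<and> s (u x) = x \<and> r (u x) = x) \<and>
     (\<forall>a\<in>Gs. \<forall>b\<in>Gs. s a = r b \<longrightarrow> m a b \<in> Gs \<and> s (m a b) = s b \<and> r (m a b) = r a) \<and>
     (\<forall>a\<in>Gs. \<forall>b\<in>Gs. \<forall>c\<in>Gs. s a = r b \<longrightarrow> s b = r c \<longrightarrow> m (m a b) c = m a (m b c)) \<and>
     (\<forall>a\<in>Gs. m (u (r a)) a = a \<and> m a (u (s a)) = a) \<and>
     (\<forall>a\<in>Gs. s (i a) = r a \<and> r (i a) = s a \<and> m a (i a) = u (r a) \<and> m (i a) a = u (s a))"

text \<open>Etale groupoid G with unit space T (identified with G^(0) via u):
  a topological groupoid whose range map is a local homeomorphism.\<close>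
definition etale_groupoid ::
  "'g topology \<Rightarrow> 't topology \<Rightarrow> ('g \<Rightarrow> 't) \<Rightarrow> ('g \<Rightarrow> 't) \<Rightarrow> ('g \<Rightarrow> 'g \<Rightarrow> 'g) \<Rightarrow> ('g \<Rightarrow> 'g) \<Rightarrow> ('t \<Rightarrow> 'g) \<Rightarrow> bool" where
  "etale_groupoid G T s r m i u \<longleftrightarrow>
     groupoid (topspace G) (topspace T) s r m i u \<and>
     continuous_map G T s \<and> continuous_map G T r \<and> continuous_map G G i \<and>
     continuous_map T G u \<and>
     continuous_map (fibprod G s G r) G (\<lambda>(a, b). m a b) \<and>
     local_homeo G T r"

definition G_space ::
  "'g topology \<Rightarrow> 't topology \<Rightarrow> ('g \<Rightarrow> 't) \<Rightarrow> ('g \<Rightarrow> 't) \<Rightarrow> ('g \<Rightarrow> 'g \<Rightarrow> 'g) \<Rightarrow> ('t \<Rightarrow> 'g)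
    \<Rightarrow> 'x topology \<Rightarrow> ('x \<Rightarrow> 't) \<Rightarrow> ('g \<Rightarrow> 'x \<Rightarrow> 'x) \<Rightarrow> bool" where
  "G_space G T s r m u X g act \<longleftrightarrow>
     continuous_map X T g \<and>
     continuous_map (fibprod G s X g) X (\<lambda>(a, x). act a x) \<and>
     (\<forall>a\<in>topspace G. \<forall>x\<in>topspace X. s a = g x \<longrightarrow> g (act a x) = r a) \<and>
     (\<forall>x\<in>topspace X. act (u (g x)) x = x) \<and>
     (\<forall>a\<in>topspace G. \<forall>b\<in>topspace G. \<forall>x\<in>topspace X.
        s a = r b \<longrightarrow> s b = g x \<longrightarrow> act (m a b) x = act a (act b x))"

text \<open>A sheaf of abelian groups on T, given by its etale space E with projection p,
  fibrewise addition add, zero section zero and negation neg.\<close>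
definition ab_sheaf_space ::
  "'t topology \<Rightarrow> 'e topology \<Rightarrow> ('e \<Rightarrow> 't) \<Rightarrow> ('e \<Rightarrow> 'e \<Rightarrow> 'e) \<Rightarrow> ('t \<Rightarrow> 'e) \<Rightarrow> ('e \<Rightarrow> 'e) \<Rightarrow> bool" where
  "ab_sheaf_space T E p add zero neg \<longleftrightarrow>
     local_homeo E T p \<and>
     continuous_map T E zero \<and> (\<forall>t\<in>topspace T. p (zero t) = t) \<and>
     continuous_map E E neg \<and>
     continuous_map (fibprod E p E p) E (\<lambda>(e, e'). add e e') \<and>
     (\<forall>e\<in>topspace E. p (neg e) = p e \<and> add e (zero (p e)) = e \<and> add e (neg e) = zero (p e)) \<and>
     (\<forall>e\<in>topspace E. \<forall>e'\<in>topspace E. p e = p e' \<longrightarrow> p (add e e') = p e \<and> add e e' = add e' e) \<and>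
     (\<forall>e\<in>topspace E. \<forall>e'\<in>topspace E. \<forall>e''\<in>topspace E. p e = p e' \<longrightarrow> p e' = p e'' \<longrightarrow>
        add (add e e') e'' = add e (add e' e''))"

definition G_sheaf ::
  "'g topology \<Rightarrow> 't topology \<Rightarrow> ('g \<Rightarrow> 't) \<Rightarrow> ('g \<Rightarrow> 't) \<Rightarrow> ('g \<Rightarrow> 'g \<Rightarrow> 'g) \<Rightarrow> ('t \<Rightarrow> 'g)
    \<Rightarrow> 'e topology \<Rightarrow> ('e \<Rightarrow> 't) \<Rightarrow> ('e \<Rightarrow> 'e \<Rightarrow> 'e) \<Rightarrow> ('t \<Rightarrow> 'e) \<Rightarrow> ('e \<Rightarrow> 'e)
    \<Rightarrow> ('g \<Rightarrow> 'e \<Rightarrow> 'e) \<Rightarrow> bool" where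
  "G_sheaf G T s r m u E p add zero neg act \<longleftrightarrow>
     ab_sheaf_space T E p add zero neg \<and> G_space G T s r m u E p act \<and>
     (\<forall>a\<in>topspace G. \<forall>e\<in>topspace E. \<forall>e'\<in>topspace E. s a = p e \<longrightarrow> p e = p e' \<longrightarrow>
        act a (add e e') = add (act a e) (act a e'))"

text \<open>T_n: (n+1)-tuples (x_0,...,x_n), encoded as functions on {0..n}, with g(x_0)=...=g(x_n).\<close>
definition Tn_set :: "'x topology \<Rightarrow> ('x \<Rightarrow> 't) \<Rightarrow> nat \<Rightarrow> (nat \<Rightarrow> 'x) set" where
  "Tn_set X0 g n = {x \<in> PiE {0..n} (\<lambda>_. topspace X0). \<forall>i\<in>{0..n}. g (x i) = g (x 0)}"

definition Tn :: "'x topology \<Rightarrow> ('x \<Rightarrow> 't) \<Rightarrow> nat \<Rightarrow> (nat \<Rightarrow> 'x) topology" where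
  "Tn X0 g n = subtopology (product_topology (\<lambda>_. X0) {0..n}) (Tn_set X0 g n)"

definition gn :: "('x \<Rightarrow> 't) \<Rightarrow> (nat \<Rightarrow> 'x) \<Rightarrow> 't" where
  "gn g x = g (x 0)"

definition Tnf :: "'x topology \<Rightarrow> ('x \<Rightarrow> 't) \<Rightarrow> nat \<Rightarrow> (nat \<Rightarrow> 'x) set" where
  "Tnf X0 g n = {x \<in> topspace (Tn X0 g n). inj_on x {0..n}}"

definition gn_preim :: "'x topology \<Rightarrow> ('x \<Rightarrow> 't) \<Rightarrow> nat \<Rightarrow> 't set \<Rightarrow> (nat \<Rightarrow> 'x) set" where
  "gn_preim X0 g n U = {x \<in> topspace (Tn X0 g n). gn g x \<in> U}"

text \<open>Gamma(U, F^n) = Gamma(g_n^{-1}(U), g_n^* F): continuous sections of the etale space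
  of the pullback sheaf g_n^* F (i.e. continuous maps s into E with p (s x) = g_n x).\<close>
definition sec_Fn ::
  "'x topology \<Rightarrow> ('x \<Rightarrow> 't) \<Rightarrow> nat \<Rightarrow> 'e topology \<Rightarrow> ('e \<Rightarrow> 't) \<Rightarrow> 't set \<Rightarrow> ((nat \<Rightarrow> 'x) \<Rightarrow> 'e) set" where
  "sec_Fn X0 g n E p U =
     {s. continuous_map (subtopology (Tn X0 g n) (gn_preim X0 g n U)) E s \<and>
         (\<forall>x\<in>gn_preim X0 g n U. p (s x) = gn g x)}"

text \<open>Gamma(U, F^{n,a}): sections with support in T_n^f that are alternating under S_{n+1}.\<close>
definition sec_Fna ::
  "'x topology \<Rightarrow> ('x \<Rightarrow> 't) \<Rightarrow> nat \<Rightarrow> 'e topology \<Rightarrow> ('e \<Rightarrow> 't) \<Rightarrow> ('t \<Rightarrow> 'e) \<Rightarrow> ('e \<Rightarrow> 'e)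
     \<Rightarrow> 't set \<Rightarrow> ((nat \<Rightarrow> 'x) \<Rightarrow> 'e) set" where
  "sec_Fna X0 g n E p zero neg U =
     {s \<in> sec_Fn X0 g n E p U.
        (subtopology (Tn X0 g n) (gn_preim X0 g n U)) closure_of
            {x \<in> gn_preim X0 g n U. s x \<noteq> zero (gn g x)} \<subseteq> Tnf X0 g n \<and>
        (\<forall>\<sigma>. \<sigma> permutes {0..n} \<longrightarrow>
           (\<forall>x\<in>gn_preim X0 g n U. s (x \<circ> \<sigma>) = (if evenperm \<sigma> then s x else neg (s x))))}"

text \<open>A sheaf on T, given by its sections Sec U over open sets U (functions defined on Dom U,
  restriction being restriction of functions), is c-soft if every section over a compact
  K extends to a global section.  A section over K is a germ along K, i.e. a section over
  some open U containing K, two such being identified if they agree on an open W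
  with K \<subseteq> W.\<close>
definition c_soft :: "'t topology \<Rightarrow> ('t set \<Rightarrow> ('d \<Rightarrow> 'e) set) \<Rightarrow> ('t set \<Rightarrow> 'd set) \<Rightarrow> bool" where
  "c_soft T Sec Dom \<longleftrightarrow>
     (\<forall>K U s. compactin T K \<and> openin T U \<and> K \<subseteq> U \<and> s \<in> Sec U \<longrightarrow>
        (\<exists>t\<in>Sec (topspace T). \<exists>W. openin T W \<and> K \<subseteq> W \<and> W \<subseteq> U \<and>
            (\<forall>x\<in>Dom W. t x = s x)))"

end

theory Submission
  imports Defs
begin


lemma td_subtopology:
  "totally_disconnected_space X \<Longrightarrow> totally_disconnected_space (subtopology X S)"
  unfolding totally_disconnected_space_def by (simp add: connectedin_subtopology)

lemma clopen_sep:
  assumes lc: "locally_compact_space X" and H: "Hausdorff_space X"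
    and td: "totally_disconnected_space X" and C: "compactin X C"
    and Ow: "openin X Ow" and CO: "C \<subseteq> Ow"
  obtains V where "openin X V" "closedin X V" "C \<subseteq> V" "V \<subseteq> Ow"
proof -
  have "separated_between X {x} (topspace X - Ow)" if x: "x \<in> C" for x
  proof -
    have xt: "x \<in> topspace X" using C x compactin_subset_topspace by blast
    have cc: "connectedin X (connected_component_of_set X x)" by (rule connectedin_connected_component_of)
    obtain a where a: "connected_component_of_set X x \<subseteq> {a}"
      using td cc unfolding totally_disconnected_space_def by meson
    have "connected_component_of X x x" using xt connected_component_of_refl by metis
    then have "x \<in> connected_component_of_set X x" by simp
    with a have eq: "connected_component_of_set X x = {x}" by blast
    have "connected_component_of_set X x \<in> connected_components_of X"
      using xt unfolding connected_components_of_def by (rule imageI)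
    then have comp: "{x} \<in> connected_components_of X" by (simp only: eq)
    have c1: "compactin X {x}" using xt by simp
    have c2: "closedin X (topspace X - Ow)" using Ow by blast
    have c3: "disjnt {x} (topspace X - Ow)" using x CO by (auto simp: disjnt_def)
    show ?thesis
      using separated_between_compact_connected_component[OF lc H comp c1 c2 c3] .
  qed
  then have pw: "\<forall>x\<in>C. separated_between X {x} (topspace X - Ow)" by blast
  have e: "C = {} \<longrightarrow> topspace X - Ow \<subseteq> topspace X" by blast
  have "separated_between X C (topspace X - Ow)"
    using iffD2[OF separated_between_pointwise_left[OF C], OF conjI[OF e pw]] .
  then obtain A B where AB: "openin X A" "openin X B" "A \<union> B = topspace X" "disjnt A B"
     "C \<subseteq> A" "topspace X - Ow \<subseteq> B"
    unfolding separated_between_def by blast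
  have AB': "A = topspace X - B" using AB(3,4) unfolding disjnt_def by blast
  have Ac: "closedin X A" unfolding AB' using AB(2) by (rule closedin_diff[OF closedin_topspace])
  have AO: "A \<subseteq> Ow" using AB' AB(6) by blast
  show ?thesis by (rule that[OF AB(1) Ac AB(5) AO])
qed

lemma lc_nbhd:
  assumes H: "Hausdorff_space T" and lc: "locally_compact_space T"
    and K: "compactin T K" and U: "openin T U" and KU: "K \<subseteq> U"
  obtains V L where "openin T V" "compactin T L" "K \<subseteq> V" "V \<subseteq> L" "L \<subseteq> U"
proof -
  have lc': "locally_compact_space (subtopology T U)"
    by (rule locally_compact_space_open_subset) (use H lc U in auto)
  have H': "Hausdorff_space (subtopology T U)" using H by (rule Hausdorff_space_subtopology)
  have K': "compactin (subtopology T U) K" using K KU by (rule compact_imp_compactin_subtopology)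
  have all: "\<forall>K. compactin (subtopology T U) K \<longrightarrow> (\<exists>V L. openin (subtopology T U) V \<and> compactin (subtopology T U) L \<and> closedin (subtopology T U) L \<and> K \<subseteq> V \<and> V \<subseteq> L)"
    using locally_compact_space_compact_closed_compact[of "subtopology T U"] H' lc' by simp
  obtain V L where VL: "openin (subtopology T U) V" "compactin (subtopology T U) L" "K \<subseteq> V" "V \<subseteq> L"
    using all K' by meson
  have "openin T V \<and> V \<subseteq> U" using VL(1) openin_open_subtopology[OF U] by simp
  moreover have "compactin T L \<and> L \<subseteq> U" using VL(2) by (simp add: compactin_subtopology)
  ultimately show ?thesis using that[of V L] VL(3,4) by simp
qed



lemma topspace_Tn: "topspace (Tn X0 g n) = Tn_set X0 g n"
proof -
  have "Tn_set X0 g n \<subseteq> topspace (product_topology (\<lambda>_. X0) {0..n})"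
    unfolding Tn_set_def topspace_product_topology by blast
  then show ?thesis unfolding Tn_def topspace_subtopology by (rule Int_absorb1)
qed

lemma Tn_setD: "x \<in> Tn_set X0 g n \<Longrightarrow> x \<in> PiE {0..n} (\<lambda>_. topspace X0) \<and> (\<forall>k\<in>{0..n}. g (x k) = g (x 0))"
  unfolding Tn_set_def mem_Collect_eq by assumption

lemma Tn_memD: "x \<in> topspace (Tn X0 g n) \<Longrightarrow> x \<in> PiE {0..n} (\<lambda>_. topspace X0) \<and> (\<forall>k\<in>{0..n}. g (x k) = g (x 0))"
  unfolding topspace_Tn Tn_set_def by blast

lemma Hausdorff_Tn: "Hausdorff_space X0 \<Longrightarrow> Hausdorff_space (Tn X0 g n)"
  unfolding Tn_def
  by (intro Hausdorff_space_subtopology) (simp add: Hausdorff_space_product_topology)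

lemma cont_proj_Tn: "k \<in> {0..n} \<Longrightarrow> continuous_map (Tn X0 g n) X0 (\<lambda>x. x k)"
  unfolding Tn_def
  by (intro continuous_map_from_subtopology) (rule continuous_map_product_projection[where X="\<lambda>_. X0", simplified]; simp)

lemma cont_gn: "continuous_map X0 T g \<Longrightarrow> continuous_map (Tn X0 g n) T (gn g)"
  unfolding gn_def using continuous_map_compose[OF cont_proj_Tn[of 0 n X0 g]] by (simp add: o_def)

lemma td_Tn:
  assumes "totally_disconnected_space X0"
  shows "totally_disconnected_space (Tn X0 g n)"
  unfolding totally_disconnected_space_def
proof (intro allI impI)
  fix C assume C: "connectedin (Tn X0 g n) C"
  show "\<exists>a. C \<subseteq> {a}"
  proof (cases "C = {}")
    case True then show ?thesis by blast
  next
    case False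
    then obtain c where c: "c \<in> C" by blast
    have Csub: "C \<subseteq> topspace (Tn X0 g n)" using C connectedin_subset_topspace by blast
    have "y = c" if y: "y \<in> C" for y
    proof
      fix k
      show "y k = c k"
      proof (cases "k \<in> {0..n}")
        case True
        have "connectedin X0 ((\<lambda>x. x k) ` C)"
          using connectedin_continuous_map_image[OF cont_proj_Tn[OF True] C] .
        then obtain a where "(\<lambda>x. x k) ` C \<subseteq> {a}" using assms unfolding totally_disconnected_space_def by blast
        then show ?thesis using y c by blast
      next
        case False
        have "y \<in> topspace (Tn X0 g n)" "c \<in> topspace (Tn X0 g n)" using Csub y c by auto
        then have "y k = undefined" "c k = undefined" using Tn_memD[of y X0 g n] Tn_memD[of c X0 g n] False
          by (auto simp: PiE_def extensional_def)
        then show ?thesis by simp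
      qed
    qed
    then show ?thesis by blast
  qed
qed

lemma closed_Tn_set:
  assumes H: "Hausdorff_space T" and g: "continuous_map X0 T g"
  shows "closedin (product_topology (\<lambda>_. X0) {0..n}) (Tn_set X0 g n)"
proof -
  let ?P = "product_topology (\<lambda>_. X0) {0..n}"
  have "Tn_set X0 g n = (\<Inter>k\<in>{0..n}. {x \<in> topspace ?P. g (x k) = g (x 0)})"
    unfolding Tn_set_def by (auto simp: topspace_product_topology)
  moreover have "closedin ?P {x \<in> topspace ?P. g (x k) = g (x 0)}" if "k \<in> {0..n}" for k
  proof -
    have "continuous_map ?P T (\<lambda>x. g (x k))" "continuous_map ?P T (\<lambda>x. g (x 0))"
      using continuous_map_compose[OF continuous_map_product_projection[of k "{0..n}" "\<lambda>_. X0"] g]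
        continuous_map_compose[OF continuous_map_product_projection[of 0 "{0..n}" "\<lambda>_. X0"] g] that
      by (auto simp: o_def)
    then show ?thesis using closedin_continuous_maps_eq[OF H] by blast
  qed
  moreover have ne: "(\<lambda>k. {x \<in> topspace ?P. g (x k) = g (x 0)}) ` {0..n} \<noteq> {}" by auto
  ultimately show ?thesis using closedin_Inter[OF ne] by auto
qed

lemma compact_gn_preim:
  assumes H: "Hausdorff_space T" and g: "continuous_map X0 T g" and pr: "proper_map X0 T g"
    and L: "compactin T L"
  shows "compactin (Tn X0 g n) (gn_preim X0 g n L)"
proof -
  let ?P = "product_topology (\<lambda>_. X0) {0..n}"
  have c1: "compactin X0 {x \<in> topspace X0. g x \<in> L}" using pr L proper_map_alt by blast
  have "compactin ?P (PiE {0..n} (\<lambda>_. {x \<in> topspace X0. g x \<in> L}))"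
    using c1 compactin_PiE by blast
  then have "compactin ?P (Tn_set X0 g n \<inter> PiE {0..n} (\<lambda>_. {x \<in> topspace X0. g x \<in> L}))"
    using closed_Int_compactin closed_Tn_set[OF H g] by blast
  moreover have "Tn_set X0 g n \<inter> PiE {0..n} (\<lambda>_. {x \<in> topspace X0. g x \<in> L}) = gn_preim X0 g n L"
  proof (intro equalityI subsetI)
    fix x assume x: "x \<in> Tn_set X0 g n \<inter> PiE {0..n} (\<lambda>_. {x \<in> topspace X0. g x \<in> L})"
    have "0 \<in> {0..n}" by simp
    then have "x 0 \<in> {x \<in> topspace X0. g x \<in> L}" using x by (simp add: PiE_iff)
    then show "x \<in> gn_preim X0 g n L" using x unfolding gn_preim_def topspace_Tn gn_def by simp
  next
    fix x assume x: "x \<in> gn_preim X0 g n L"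
    then have x1: "x \<in> Tn_set X0 g n" "g (x 0) \<in> L" unfolding gn_preim_def topspace_Tn gn_def by auto
    then have x2: "x \<in> PiE {0..n} (\<lambda>_. topspace X0)" "\<forall>k\<in>{0..n}. g (x k) = g (x 0)"
      using Tn_setD by blast+
    have a1: "\<forall>k\<in>{0..n}. x k \<in> {x \<in> topspace X0. g x \<in> L}"
    proof
      fix k assume k: "k \<in> {0..n}"
      have "x k \<in> topspace X0" using PiE_mem[OF x2(1) k] .
      moreover have "g (x k) \<in> L" using x2(2) k x1(2) by metis
      ultimately show "x k \<in> {x \<in> topspace X0. g x \<in> L}" by blast
    qed
    have a2: "x \<in> extensional {0..n}" using PiE_iff[THEN iffD1, OF x2(1)] by (rule conjunct2)
    have "x \<in> PiE {0..n} (\<lambda>_. {x \<in> topspace X0. g x \<in> L})"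
      using PiE_iff[THEN iffD2, OF conjI[OF a1 a2]] .
    then show "x \<in> Tn_set X0 g n \<inter> PiE {0..n} (\<lambda>_. {x \<in> topspace X0. g x \<in> L})" by (rule IntI[OF x1(1)])
  qed
  ultimately have "compactin ?P (gn_preim X0 g n L)" by simp
  moreover have "gn_preim X0 g n L \<subseteq> Tn_set X0 g n" unfolding gn_preim_def topspace_Tn by blast
  ultimately have "compactin (subtopology ?P (Tn_set X0 g n)) (gn_preim X0 g n L)"
    by (simp add: compactin_subtopology)
  then show ?thesis by (simp only: Tn_def)
qed

lemma open_Tnf:
  assumes H: "Hausdorff_space X0"
  shows "openin (Tn X0 g n) (Tnf X0 g n)"
proof -
  let ?X = "Tn X0 g n"
  define F where "F = (\<Union>a\<in>{0..n}. \<Union>b\<in>{0..n}-{a}. {{x \<in> topspace ?X. x a = x b}})"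
  have fin: "finite F" unfolding F_def by (intro finite_UN_I) auto
  have cl: "closedin ?X S" if "S \<in> F" for S
  proof -
    obtain a b where ab: "a \<in> {0..n}" "b \<in> {0..n}" "S = {x \<in> topspace ?X. x a = x b}"
      using \<open>S \<in> F\<close> unfolding F_def by blast
    then show ?thesis using closedin_continuous_maps_eq[OF H cont_proj_Tn cont_proj_Tn] by blast
  qed
  have "Tnf X0 g n = topspace ?X - \<Union>F"
  proof (intro equalityI subsetI)
    fix x assume "x \<in> Tnf X0 g n"
    then have x: "x \<in> topspace ?X" "inj_on x {0..n}" unfolding Tnf_def mem_Collect_eq by blast+
    have "x \<notin> S" if S: "S \<in> F" for S
    proof
      assume xS: "x \<in> S"
      obtain a b where ab: "a \<in> {0..n}" "b \<in> {0..n}" "a \<noteq> b" "S = {x \<in> topspace ?X. x a = x b}"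
        using S unfolding F_def by blast
      then have "x a = x b" using xS by blast
      then show False using x(2) ab(1-3) unfolding inj_on_def by blast
    qed
    then show "x \<in> topspace ?X - \<Union>F" using x(1) by blast
  next
    fix x assume x: "x \<in> topspace ?X - \<Union>F"
    have "inj_on x {0..n}"
    proof (rule inj_onI)
      fix a b assume ab: "a \<in> {0..n}" "b \<in> {0..n}" "x a = x b"
      show "a = b"
      proof (rule ccontr)
        assume "a \<noteq> b"
        then have "{y \<in> topspace ?X. y a = y b} \<in> F" unfolding F_def using ab(1,2) by blast
        moreover have "x \<in> {y \<in> topspace ?X. y a = y b}" using x ab(3) by blast
        ultimately show False using x by blast
      qed
    qed
    then show "x \<in> Tnf X0 g n" using x unfolding Tnf_def by blast
  qed
  then show ?thesis using closedin_Union[OF fin cl] by auto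
qed

lemma perm_Tn:
  assumes sg: "\<sigma> permutes {0..n}" and x: "x \<in> topspace (Tn X0 g n)"
  shows "x \<circ> \<sigma> \<in> topspace (Tn X0 g n)" "gn g (x \<circ> \<sigma>) = gn g x"
    "x \<circ> \<sigma> \<in> Tnf X0 g n \<longleftrightarrow> x \<in> Tnf X0 g n"
proof -
  have xs: "x \<in> PiE {0..n} (\<lambda>_. topspace X0)" "\<forall>k\<in>{0..n}. g (x k) = g (x 0)"
    using Tn_memD[OF x] by blast+
  have sk: "\<And>k. k \<in> {0..n} \<Longrightarrow> \<sigma> k \<in> {0..n}" using permutes_in_image[OF sg] by blast
  have so: "\<And>k. k \<notin> {0..n} \<Longrightarrow> \<sigma> k = k" using permutes_not_in[OF sg] by blast
  have b1: "\<forall>k\<in>{0..n}. (x \<circ> \<sigma>) k \<in> topspace X0"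
  proof
    fix k assume k: "k \<in> {0..n}"
    show "(x \<circ> \<sigma>) k \<in> topspace X0" unfolding o_def using PiE_mem[OF xs(1) sk[OF k]] .
  qed
  have xe: "x \<in> extensional {0..n}" using PiE_iff[THEN iffD1, OF xs(1)] by (rule conjunct2)
  have b2: "x \<circ> \<sigma> \<in> extensional {0..n}"
    unfolding extensional_def mem_Collect_eq
  proof (intro allI impI)
    fix k assume k: "k \<notin> {0..n}"
    show "(x \<circ> \<sigma>) k = undefined" unfolding o_def so[OF k] using extensional_arb[OF xe k] .
  qed
  have "x \<circ> \<sigma> \<in> PiE {0..n} (\<lambda>_. topspace X0)"
    using PiE_iff[THEN iffD2, OF conjI[OF b1 b2]] .
  moreover have "\<forall>k\<in>{0..n}. g ((x \<circ> \<sigma>) k) = g ((x \<circ> \<sigma>) 0)"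
  proof
    fix k assume k: "k \<in> {0..n}"
    have "0 \<in> {0..n}" by simp
    then have "g (x (\<sigma> 0)) = g (x 0)" using xs(2) sk by blast
    moreover have "g (x (\<sigma> k)) = g (x 0)" using xs(2) sk[OF k] by blast
    ultimately show "g ((x \<circ> \<sigma>) k) = g ((x \<circ> \<sigma>) 0)" unfolding o_def by simp
  qed
  ultimately have "x \<circ> \<sigma> \<in> Tn_set X0 g n" unfolding Tn_set_def mem_Collect_eq by (rule conjI)
  then show t: "x \<circ> \<sigma> \<in> topspace (Tn X0 g n)" unfolding topspace_Tn .
  have "0 \<in> {0..n}" by simp
  then show "gn g (x \<circ> \<sigma>) = gn g x" unfolding gn_def o_def using xs(2) sk by blast
  have "inj_on (x \<circ> \<sigma>) {0..n} \<longleftrightarrow> inj_on x (\<sigma> ` {0..n})"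
    using comp_inj_on_iff[of \<sigma> "{0..n}" x] permutes_inj_on[OF sg] by blast
  also have "\<sigma> ` {0..n} = {0..n}" using permutes_image[OF sg] .
  finally show "x \<circ> \<sigma> \<in> Tnf X0 g n \<longleftrightarrow> x \<in> Tnf X0 g n" unfolding Tnf_def mem_Collect_eq using t x by blast
qed

lemma cont_perm_Tn:
  assumes sg: "\<sigma> permutes {0..n}"
  shows "continuous_map (Tn X0 g n) (Tn X0 g n) (\<lambda>x. x \<circ> \<sigma>)"
proof -
  have sk: "\<And>k. k \<in> {0..n} \<Longrightarrow> \<sigma> k \<in> {0..n}" using permutes_in_image[OF sg] by blast
  have c: "continuous_map (Tn X0 g n) (product_topology (\<lambda>_. X0) {0..n}) (\<lambda>x. x \<circ> \<sigma>)"
    unfolding continuous_map_componentwise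
  proof (intro conjI ballI)
    show "(\<lambda>x. x \<circ> \<sigma>) ` topspace (Tn X0 g n) \<subseteq> extensional {0..n}"
    proof
      fix y assume "y \<in> (\<lambda>x. x \<circ> \<sigma>) ` topspace (Tn X0 g n)"
      then obtain x where x: "x \<in> topspace (Tn X0 g n)" "y = x \<circ> \<sigma>" by blast
      then have "y \<in> topspace (Tn X0 g n)" using perm_Tn(1)[OF sg x(1)] by simp
      then show "y \<in> extensional {0..n}" using Tn_memD[of y X0 g n] by (simp add: PiE_def)
    qed
    fix k assume "k \<in> {0..n}"
    then show "continuous_map (Tn X0 g n) X0 (\<lambda>x. (x \<circ> \<sigma>) k)"
      using cont_proj_Tn[OF sk] by (simp add: o_def)
  qed
  have im: "(\<lambda>x. x \<circ> \<sigma>) \<in> topspace (Tn X0 g n) \<rightarrow> Tn_set X0 g n"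
    using perm_Tn(1)[OF sg] topspace_Tn by blast
  have c2: "continuous_map (Tn X0 g n) (subtopology (product_topology (\<lambda>_. X0) {0..n}) (Tn_set X0 g n)) (\<lambda>x. x \<circ> \<sigma>)"
    using c im continuous_map_in_subtopology by blast
  have eq: "subtopology (product_topology (\<lambda>_. X0) {0..n}) (Tn_set X0 g n) = Tn X0 g n" by (simp add: Tn_def)
  show ?thesis using c2 by (simp only: eq)
qed



lemma neg_zero:
  assumes "ab_sheaf_space T E p add zero neg" "t \<in> topspace T"
  shows "neg (zero t) = zero t"
proof -
  have A: "continuous_map T E zero" "\<forall>t\<in>topspace T. p (zero t) = t" "continuous_map E E neg"
    "\<forall>e\<in>topspace E. p (neg e) = p e \<and> add e (zero (p e)) = e \<and> add e (neg e) = zero (p e)"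
    "\<forall>e\<in>topspace E. \<forall>e'\<in>topspace E. p e = p e' \<longrightarrow> p (add e e') = p e \<and> add e e' = add e' e"
    using assms(1) unfolding ab_sheaf_space_def by blast+
  define e where "e = zero t"
  have e1: "e \<in> topspace E" unfolding e_def using continuous_map_image_subset_topspace[OF A(1)] assms(2) by blast
  have e2: "p e = t" unfolding e_def using A(2) assms(2) by blast
  have ne: "neg e \<in> topspace E" using continuous_map_image_subset_topspace[OF A(3)] e1 by blast
  have Ae: "p (neg e) = p e" "add e (zero (p e)) = e" "add e (neg e) = zero (p e)"
    using A(4) e1 by blast+
  have Ane: "p (neg (neg e)) = p (neg e)" "add (neg e) (zero (p (neg e))) = neg e"
    using A(4) ne by blast+
  have 1: "add e (neg e) = e" using Ae(3) e2 unfolding e_def by simp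
  have 2: "add (neg e) e = neg e" using Ane(2) Ae(1) e2 unfolding e_def by simp
  have pe: "p e = p (neg e)" using Ae(1) by simp
  have "add e (neg e) = add (neg e) e" using A(5)[rule_format, OF e1 ne pe] by (rule conjunct2)
  then show ?thesis using 1 2 unfolding e_def by simp
qed

lemma main:
  assumes sT: "sclch T" and sX: "sclch X0"
    and gc: "continuous_map X0 T g"
    and td: "totally_disconnected_space X0"
    and pr: "proper_map X0 T g"
    and sh: "ab_sheaf_space T E p add zero neg"
  shows "c_soft T (sec_Fna X0 g n E p zero neg) (gn_preim X0 g n)"
  unfolding c_soft_def
proof (intro allI impI)
  fix K U sec
  assume "compactin T K \<and> openin T U \<and> K \<subseteq> U \<and> sec \<in> sec_Fna X0 g n E p zero neg U"
  then have K: "compactin T K" and U: "openin T U" and KU: "K \<subseteq> U"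
    and secA: "sec \<in> sec_Fna X0 g n E p zero neg U" by auto
  let ?X = "Tn X0 g n"
  define Q where "Q = gn_preim X0 g n U"
  define Z where "Z = {x \<in> Q. sec x \<noteq> zero (gn g x)}"
  define supp where "supp = (subtopology ?X Q) closure_of Z"
  have sec_cont: "continuous_map (subtopology ?X Q) E sec"
    and sec_p: "\<forall>x\<in>Q. p (sec x) = gn g x"
    and sec_supp: "supp \<subseteq> Tnf X0 g n"
    and sec_alt: "\<forall>\<sigma>. \<sigma> permutes {0..n} \<longrightarrow> (\<forall>x\<in>Q. sec (x \<circ> \<sigma>) = (if evenperm \<sigma> then sec x else neg (sec x)))"
    using secA unfolding sec_Fna_def sec_Fn_def Q_def supp_def Z_def by auto
  have HT: "Hausdorff_space T" and lcT: "locally_compact_space T" using sT sclch_def by auto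
  have HX0: "Hausdorff_space X0" using sX sclch_def by auto
  have HX: "Hausdorff_space ?X" using Hausdorff_Tn[OF HX0] .
  have gnc: "continuous_map ?X T (gn g)" using cont_gn[OF gc] .
  have gnT: "\<And>x. x \<in> topspace ?X \<Longrightarrow> gn g x \<in> topspace T" using gnc by (auto simp: continuous_map_def)
  obtain V1 L where V1L: "openin T V1" "compactin T L" "K \<subseteq> V1" "V1 \<subseteq> L" "L \<subseteq> U"
    using lc_nbhd[OF HT lcT K U KU] by blast
  obtain W L1 where WL1: "openin T W" "compactin T L1" "K \<subseteq> W" "W \<subseteq> L1" "L1 \<subseteq> V1"
    using lc_nbhd[OF HT lcT K V1L(1,3)] by blast
  define P where "P = gn_preim X0 g n L"
  have Pc: "compactin ?X P" unfolding P_def using compact_gn_preim[OF HT gc pr V1L(2)] .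
  have L1c: "compactin ?X (gn_preim X0 g n L1)" using compact_gn_preim[OF HT gc pr WL1(2)] .
  have L1cl: "closedin ?X (gn_preim X0 g n L1)" using compactin_imp_closedin[OF HX L1c] .
  define C where "C = supp \<inter> gn_preim X0 g n L1"
  obtain C' where C': "closedin ?X C'" "supp = Q \<inter> C'"
    using closedin_closure_of[of "subtopology ?X Q" Z] unfolding supp_def closedin_subtopology by blast
  have L1Q: "gn_preim X0 g n L1 \<subseteq> Q" unfolding Q_def gn_preim_def using WL1 V1L by auto
  have "C = C' \<inter> gn_preim X0 g n L1" unfolding C_def using C' L1Q by auto
  then have Cc: "compactin ?X C" using closed_Int_compactin[OF C'(1) L1c] by simp
  define Ow where "Ow = Tnf X0 g n \<inter> gn_preim X0 g n V1"
  have V1o: "openin ?X (gn_preim X0 g n V1)"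
    using openin_continuous_map_preimage[OF gnc V1L(1)] unfolding gn_preim_def .
  have Owo: "openin ?X Ow" unfolding Ow_def using open_Tnf[OF HX0] V1o by blast
  have OwP: "Ow \<subseteq> P" unfolding Ow_def P_def gn_preim_def using V1L by auto
  have COw: "C \<subseteq> Ow" unfolding C_def Ow_def using sec_supp WL1 unfolding gn_preim_def by auto
  define XP where "XP = subtopology ?X P"
  have cXP: "compact_space XP" unfolding XP_def using compact_space_subtopology[OF Pc] .
  have lcXP: "locally_compact_space XP" using compact_imp_locally_compact_space[OF cXP] .
  have HXP: "Hausdorff_space XP" unfolding XP_def using Hausdorff_space_subtopology[OF HX] .
  have tdXP: "totally_disconnected_space XP" unfolding XP_def using td_subtopology[OF td_Tn[OF td]] .
  have CXP: "compactin XP C" unfolding XP_def using Cc COw OwP compactin_subtopology by blast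
  have OwXP: "openin XP Ow" unfolding XP_def openin_subtopology using Owo OwP by blast
  obtain V where V: "openin XP V" "closedin XP V" "C \<subseteq> V" "V \<subseteq> Ow"
    using clopen_sep[OF lcXP HXP tdXP CXP OwXP COw] by blast
  have Vo: "openin ?X V"
  proof -
    obtain T' where T': "openin ?X T'" "V = T' \<inter> P" using V(1) unfolding XP_def openin_subtopology by blast
    have "V = T' \<inter> gn_preim X0 g n V1" using T' V(4) unfolding Ow_def P_def gn_preim_def using V1L by auto
    then show ?thesis using T'(1) V1o by auto
  qed
  have Vc: "closedin ?X V"
  proof -
    have "compactin XP V" using closedin_compact_space[OF cXP V(2)] .
    then have "compactin ?X V" unfolding XP_def compactin_subtopology by blast
    then show ?thesis using compactin_imp_closedin[OF HX] by blast
  qed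
  define Perm where "Perm = {\<sigma>. \<sigma> permutes {0..n}}"
  have finPerm: "finite Perm" unfolding Perm_def using finite_permutations by blast
  define V' where "V' = (\<Union>\<sigma>\<in>Perm. {x \<in> topspace ?X. x \<circ> \<sigma> \<in> V})"
  have V'o: "openin ?X V'" unfolding V'_def Perm_def
    using openin_continuous_map_preimage[OF cont_perm_Tn Vo] by blast
  have V'c: "closedin ?X V'" unfolding V'_def
    by (rule closedin_Union) (use finPerm closedin_continuous_map_preimage[OF cont_perm_Tn Vc] in \<open>auto simp: Perm_def\<close>)
  have Vsub: "V \<subseteq> topspace ?X" using openin_subset[OF Vo] .
  have VV': "V \<subseteq> V'" unfolding V'_def Perm_def using Vsub permutes_id by fastforce
  have V'sub: "V' \<subseteq> Tnf X0 g n \<and> V' \<subseteq> Q"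
  proof
    show "V' \<subseteq> Tnf X0 g n"
    proof
      fix x assume "x \<in> V'"
      then obtain \<sigma> where "\<sigma> permutes {0..n}" "x \<in> topspace ?X" "x \<circ> \<sigma> \<in> V" unfolding V'_def Perm_def by blast
      then show "x \<in> Tnf X0 g n" using perm_Tn(3) V(4) unfolding Ow_def by blast
    qed
    show "V' \<subseteq> Q"
    proof
      fix x assume "x \<in> V'"
      then obtain \<sigma> where sx: "\<sigma> permutes {0..n}" "x \<in> topspace ?X" "x \<circ> \<sigma> \<in> V" unfolding V'_def Perm_def by blast
      have "gn g (x \<circ> \<sigma>) \<in> V1" using sx(3) V(4) unfolding Ow_def gn_preim_def by blast
      then have "gn g x \<in> U" using perm_Tn(2)[OF sx(1,2)] V1L(4,5) by auto
      then show "x \<in> Q" using sx(2) unfolding Q_def gn_preim_def by blast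
    qed
  qed
  have V'inv: "x \<circ> \<tau> \<in> V' \<longleftrightarrow> x \<in> V'" if x: "x \<in> topspace ?X" and \<tau>: "\<tau> permutes {0..n}" for x \<tau>
  proof
    assume "x \<circ> \<tau> \<in> V'"
    then obtain \<sigma> where s1: "\<sigma> permutes {0..n}" "x \<circ> \<tau> \<circ> \<sigma> \<in> V" unfolding V'_def Perm_def by blast
    have "\<tau> \<circ> \<sigma> permutes {0..n}" using permutes_compose[OF s1(1) \<tau>] .
    moreover have "x \<circ> (\<tau> \<circ> \<sigma>) \<in> V" using s1(2) by (simp add: o_assoc)
    ultimately show "x \<in> V'" unfolding V'_def Perm_def using x by blast
  next
    assume "x \<in> V'"
    then obtain \<sigma> where s: "\<sigma> permutes {0..n}" "x \<circ> \<sigma> \<in> V" unfolding V'_def Perm_def by blast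
    have "x \<circ> \<tau> \<circ> (inv \<tau> \<circ> \<sigma>) = x \<circ> \<sigma>" using permutes_inv_o(1)[OF \<tau>] by (simp add: o_assoc[symmetric]) (metis comp_assoc comp_id)
    moreover have "inv \<tau> \<circ> \<sigma> permutes {0..n}" using permutes_compose[OF s(1) permutes_inv[OF \<tau>]] .
    ultimately show "x \<circ> \<tau> \<in> V'" unfolding V'_def Perm_def using perm_Tn(1)[OF \<tau> x] s by auto
  qed
  define t where "t = (\<lambda>x. if x \<in> V' then sec x else zero (gn g x))"
  have topQ: "gn_preim X0 g n (topspace T) = topspace ?X" unfolding gn_preim_def using gnT by auto
  have zc: "continuous_map T E zero" and zp: "\<forall>t\<in>topspace T. p (zero t) = t"
    using sh unfolding ab_sheaf_space_def by auto
  have zgc: "continuous_map ?X E (\<lambda>x. zero (gn g x))"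
    using continuous_map_compose[OF gnc zc] by (simp add: o_def)
  have tcont: "continuous_map ?X E t"
  proof -
    have cl1: "?X closure_of {x. x \<in> V'} = V'" using V'c closure_of_eq[of ?X V'] by simp
    have c1: "continuous_map (subtopology ?X V') E sec"
      using continuous_map_from_subtopology_mono[OF sec_cont] V'sub by blast
    have c2: "continuous_map (subtopology ?X (?X closure_of {x. x \<notin> V'})) E (\<lambda>x. zero (gn g x))"
      by (rule continuous_map_from_subtopology[OF zgc])
    have fr: "?X frontier_of {x. x \<in> V'} = {}" using clopenin_eq_frontier_of[of ?X V'] V'o V'c by simp
    have "continuous_map ?X E (\<lambda>x. if x \<in> V' then sec x else zero (gn g x))"
      apply (rule continuous_map_cases)
      using c1 cl1 apply simp
      using c2 apply simp
      using fr by simp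
    then show ?thesis unfolding t_def .
  qed
  have tsec: "t \<in> sec_Fna X0 g n E p zero neg (topspace T)"
    unfolding sec_Fna_def sec_Fn_def topQ subtopology_topspace
  proof (intro CollectI conjI ballI allI impI)
    show "continuous_map ?X E t" using tcont .
    fix x assume x: "x \<in> topspace ?X"
    show "p (t x) = gn g x" unfolding t_def using sec_p V'sub zp gnT[OF x] by auto
  next
    have "?X closure_of {x \<in> topspace ?X. t x \<noteq> zero (gn g x)} \<subseteq> V'"
      by (rule closure_of_minimal) (use V'c in \<open>auto simp: t_def\<close>)
    then show "?X closure_of {x \<in> topspace ?X. t x \<noteq> zero (gn g x)} \<subseteq> Tnf X0 g n" using V'sub by blast
  next
    fix \<sigma> x assume sg: "\<sigma> permutes {0..n}" and x: "x \<in> topspace ?X"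
    show "t (x \<circ> \<sigma>) = (if evenperm \<sigma> then t x else neg (t x))"
    proof (cases "x \<in> V'")
      case True
      then show ?thesis unfolding t_def using V'inv[OF x sg] sec_alt sg V'sub by auto
    next
      case False
      then show ?thesis unfolding t_def using V'inv[OF x sg] perm_Tn(2)[OF sg x] neg_zero[OF sh gnT[OF x]] by auto
    qed
  qed
  have agree: "\<forall>x\<in>gn_preim X0 g n W. t x = sec x"
  proof
    fix x assume xW: "x \<in> gn_preim X0 g n W"
    show "t x = sec x"
    proof (cases "x \<in> V'")
      case True then show ?thesis by (simp add: t_def)
    next
      case False
      then have "x \<notin> C" using V(3) VV' by blast
      moreover have "x \<in> gn_preim X0 g n L1" using xW WL1 unfolding gn_preim_def by auto
      ultimately have "x \<notin> supp" unfolding C_def by blast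
      moreover have "Z \<subseteq> supp" unfolding supp_def Z_def Q_def gn_preim_def
        by (rule closure_of_subset) (auto simp: topspace_subtopology)
      moreover have "x \<in> Q" using xW WL1 V1L unfolding Q_def gn_preim_def by blast
      ultimately show ?thesis using False unfolding t_def Z_def by auto
    qed
  qed
  show "\<exists>t\<in>sec_Fna X0 g n E p zero neg (topspace T). \<exists>W. openin T W \<and> K \<subseteq> W \<and> W \<subseteq> U \<and> (\<forall>x\<in>gn_preim X0 g n W. t x = sec x)"
  proof (rule bexI[OF _ tsec])
    have WU: "W \<subseteq> U" using WL1(4,5) V1L(4,5) by (meson subset_trans)
    show "\<exists>W. openin T W \<and> K \<subseteq> W \<and> W \<subseteq> U \<and> (\<forall>x\<in>gn_preim X0 g n W. t x = sec x)"
      by (rule exI[of _ W]) (intro conjI WL1(1) WL1(3) WU agree)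
  qed
qed

theorem proposition2p10:
  fixes G :: "'g topology" and T :: "'t topology" and X0 :: "'x topology" and E :: "'e topology"
    and s r :: "'g \<Rightarrow> 't" and m :: "'g \<Rightarrow> 'g \<Rightarrow> 'g" and i :: "'g \<Rightarrow> 'g" and u :: "'t \<Rightarrow> 'g"
    and g :: "'x \<Rightarrow> 't" and act0 :: "'g \<Rightarrow> 'x \<Rightarrow> 'x"
    and p :: "'e \<Rightarrow> 't" and add :: "'e \<Rightarrow> 'e \<Rightarrow> 'e" and zero :: "'t \<Rightarrow> 'e" and neg :: "'e \<Rightarrow> 'e"
    and actE :: "'g \<Rightarrow> 'e \<Rightarrow> 'e"
    and N n :: nat
  assumes "etale_groupoid G T s r m i u"
    and "sclch G" and "sclch T" and "sclch X0"
    and "G_space G T s r m u X0 g act0"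
    and "totally_disconnected_space X0"
    and "proper_map X0 T g"
    and "\<forall>t\<in>topspace T. finite {x \<in> topspace X0. g x = t} \<and> card {x \<in> topspace X0. g x = t} \<le> N"
    and "G_sheaf G T s r m u E p add zero neg actE"
  shows "c_soft T (sec_Fna X0 g n E p zero neg) (gn_preim X0 g n)"
proof -
  have gc: "continuous_map X0 T g" using assms(5) unfolding G_space_def by blast
  have sh: "ab_sheaf_space T E p add zero neg" using assms(9) unfolding G_sheaf_def by blast
  show ?thesis by (rule main[OF assms(3) assms(4) gc assms(6) assms(7) sh])
qed

end
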